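(* Let $\alpha\in(0,1]$, $C>0$, and let $\nu$ be a Borel probability measure on $\mathbb{R}$ such that for every $\varphi\in C_b^\infty(\mathbb{R})$ with $\|\varphi\|_\infty\le1$ one has $\int\varphi'\,d\nu\le C\|\varphi'\|_\infty^{1-\alpha}$. Then for every Borel set $A\subset\mathbb{R}$, $\nu(A)\le C\lambda(A)^\alpha$, where $\lambda$ is Lebesgue measure. Moreover, if $\rho_\nu$ is the density of $\nu$, then $\rho_\nu\in L^p(\lambda)$ whenever $1<p<\frac{1}{1-\alpha}$, and $$\|\rho_\nu\|_{L^p(\lambda)}\le\Bigl(p(p-1)^{-1}+p\Bigl(\frac{1}{1-\alpha}-p\Bigr)^{-1}\Bigr)^{1/p}C^{\frac1\alpha(1-1/p)}.$$ (For $\alpha=1$, $\frac{1}{1-\alpha}$ is interpreted as $+\infty$ and the term $p(\frac{1}{1-\alpha}-p)^{-1}$ as $0$.)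
   Context: $C_b^\infty(\mathbb{R})$ is the space of bounded smooth functions on $\mathbb{R}$ with bounded derivatives of all orders; $\|\varphi\|_\infty=\sup_t|\varphi(t)|$. *)

theory Defs
  imports "HOL-Probability.Probability"
begin

definition Cb_inf :: "(real \<Rightarrow> real) set" where
  "Cb_inf = {\<phi>. \<forall>n. (\<forall>x. ((deriv ^^ n) \<phi>) differentiable (at x))
                     \<and> bounded (range ((deriv ^^ n) \<phi>))}"

definition sup_norm :: "(real \<Rightarrow> real) \<Rightarrow> real" where
  "sup_norm f = (SUP t. \<bar>f t\<bar>)"

end

theory Submission
  imports Defs "HOL-Computational_Algebra.Polynomial"
begin


lemma chain_Cb_inf:
  fixes F :: "nat \<Rightarrow> real \<Rightarrow> real"
  assumes "F 0 = f" "\<And>n x. (F n has_real_derivative F (Suc n) x) (at x)"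
    "\<And>n. bounded (range (F n))"
  shows "f \<in> Cb_inf"
proof -
  have eq: "(deriv ^^ n) f = F n" for n
  proof (induction n)
    case 0 then show ?case using assms(1) by simp
  next
    case (Suc n)
    have "(deriv ^^ Suc n) f = deriv (F n)" using Suc by simp
    also have "\<dots> = F (Suc n)" using assms(2) DERIV_imp_deriv by blast
    finally show ?case .
  qed
  show ?thesis unfolding Cb_inf_def
    using assms(2,3) eq real_differentiable_def by fastforce
qed

fun TP :: "nat \<Rightarrow> real poly" where
  "TP 0 = [:0,1:]"
| "TP (Suc m) = pderiv (TP m) * [:1,0,-1:]"

definition T :: "nat \<Rightarrow> real \<Rightarrow> real" where
  "T m x = poly (TP m) (tanh x)"

lemma T_deriv: "(T m has_real_derivative T (Suc m) x) (at x)"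
proof -
  have "((\<lambda>x. poly (TP m) (tanh x)) has_real_derivative poly (pderiv (TP m)) (tanh x) * (1 - tanh x ^ 2)) (at x)"
    by (rule DERIV_chain2[OF poly_DERIV]) (insert has_field_derivative_tanh[OF _ DERIV_ident, of x], simp)
  moreover have "poly (pderiv (TP m)) (tanh x) * (1 - tanh x ^ 2) = T (Suc m) x"
    by (simp add: T_def power2_eq_square algebra_simps)
  ultimately show ?thesis unfolding T_def by simp
qed

lemma T_bounded: "bounded (range (T m))"
proof -
  have "compact (poly (TP m) ` {-1..1})"
    by (intro compact_continuous_image continuous_intros) auto
  then have "bounded (poly (TP m) ` {-1..1})" by (rule compact_imp_bounded)
  moreover have "range (T m) \<subseteq> poly (TP m) ` {-1..1}"
  proof
    fix y assume "y \<in> range (T m)"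
    then obtain x where x: "y = poly (TP m) (tanh x)" by (auto simp: T_def)
    have "tanh x \<in> {-1..1}" using tanh_real_bounds[of x] by auto
    then show "y \<in> poly (TP m) ` {-1..1}" using x by blast
  qed
  ultimately show ?thesis by (rule bounded_subset)
qed

lemma T0: "T 0 = tanh" by (auto simp: T_def)

definition lc :: "real \<Rightarrow> real" where "lc x = ln (cosh x)"

lemma lc_deriv: "(lc has_real_derivative tanh x) (at x)"
  unfolding lc_def
  by (auto intro!: derivative_eq_intros simp: tanh_def field_simps)

lemma lc_lip: "\<bar>lc u - lc v\<bar> \<le> \<bar>u - v\<bar>"
proof -
  have *: "\<bar>lc u - lc v\<bar> \<le> \<bar>u - v\<bar>" if vu: "v < u" for u v
  proof -
    obtain z where "lc u - lc v = (u - v) * tanh z"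
      using MVT2[OF vu lc_deriv] by blast
    moreover have "\<bar>tanh z\<bar> \<le> 1" using tanh_real_bounds[of z] by auto
    ultimately show ?thesis using vu by (simp add: abs_mult mult_left_le)
  qed
  show ?thesis
    by (cases u v rule: linorder_cases) (use *[of u v] *[of v u] in \<open>auto simp: abs_minus_commute\<close>)
qed

definition G :: "nat \<Rightarrow> real \<Rightarrow> real" where
  "G m = (case m of 0 \<Rightarrow> lc | Suc j \<Rightarrow> T j)"

lemma G_deriv: "(G m has_real_derivative G (Suc m) x) (at x)"
  by (cases m) (auto simp: G_def T0 lc_deriv T_deriv)

definition testf :: "real \<Rightarrow> real \<Rightarrow> nat set \<Rightarrow> (nat \<Rightarrow> real) \<Rightarrow> (nat \<Rightarrow> real) \<Rightarrow> real \<Rightarrow> real" where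
  "testf c n K a b x = c / (2*n) * (\<Sum>k\<in>K. lc (n*(x - a k)) - lc (n*(x - b k)))"

definition TF :: "real \<Rightarrow> real \<Rightarrow> nat set \<Rightarrow> (nat \<Rightarrow> real) \<Rightarrow> (nat \<Rightarrow> real) \<Rightarrow> nat \<Rightarrow> real \<Rightarrow> real" where
  "TF c n K a b m x = c / (2*n) * n^m * (\<Sum>k\<in>K. G m (n*(x - a k)) - G m (n*(x - b k)))"

lemma G_chain: "((\<lambda>z. G m (n * (z - a))) has_real_derivative G (Suc m) (n*(x-a)) * n) (at x)"
  by (rule DERIV_chain2[OF G_deriv]) (auto intro!: derivative_eq_intros)

lemma TF_deriv: "(TF c n K a b m has_real_derivative TF c n K a b (Suc m) x) (at x)"
proof -
  have "((\<lambda>x. c / (2*n) * n^m * (\<Sum>k\<in>K. G m (n*(x - a k)) - G m (n*(x - b k)))) has_real_derivative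
     c / (2*n) * n^m * (\<Sum>k\<in>K. G (Suc m) (n*(x - a k)) * n - G (Suc m) (n*(x - b k)) * n)) (at x)"
    by (intro derivative_eq_intros G_chain refl) (auto intro: G_chain)
  moreover have "c / (2*n) * n^m * (\<Sum>k\<in>K. G (Suc m) (n*(x - a k)) * n - G (Suc m) (n*(x - b k)) * n)
     = TF c n K a b (Suc m) x"
  proof -
    have "(\<Sum>k\<in>K. G (Suc m) (n*(x - a k)) * n - G (Suc m) (n*(x - b k)) * n)
       = n * (\<Sum>k\<in>K. G (Suc m) (n*(x - a k)) - G (Suc m) (n*(x - b k)))"
      by (simp add: sum_distrib_left algebra_simps)
    then show ?thesis unfolding TF_def by simp
  qed
  ultimately show ?thesis unfolding TF_def by simp
qed

lemma TF_bounded: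
  assumes "n > 0" and "\<And>k. k \<in> K \<Longrightarrow> a k \<le> b k"
  shows "bounded (range (TF c n K a b m))"
proof (cases m)
  case 0
  have "\<bar>TF c n K a b m x\<bar> \<le> \<bar>c / (2*n)\<bar> * (\<Sum>k\<in>K. n * (b k - a k))" for x
  proof -
    have "\<bar>TF c n K a b m x\<bar> = \<bar>c / (2*n)\<bar> * \<bar>\<Sum>k\<in>K. lc (n*(x - a k)) - lc (n*(x - b k))\<bar>"
      using 0 by (simp add: TF_def G_def abs_mult)
    also have "\<dots> \<le> \<bar>c / (2*n)\<bar> * (\<Sum>k\<in>K. \<bar>lc (n*(x - a k)) - lc (n*(x - b k))\<bar>)"
      by (intro mult_left_mono sum_abs) auto
    also have "\<dots> \<le> \<bar>c / (2*n)\<bar> * (\<Sum>k\<in>K. n * (b k - a k))"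
    proof (intro mult_left_mono sum_mono)
      fix k assume "k \<in> K"
      have "\<bar>lc (n*(x - a k)) - lc (n*(x - b k))\<bar> \<le> \<bar>n*(x - a k) - n*(x - b k)\<bar>" by (rule lc_lip)
      also have "\<dots> = n * (b k - a k)" using assms \<open>k \<in> K\<close> by (simp add: algebra_simps abs_mult)
      finally show "\<bar>lc (n*(x - a k)) - lc (n*(x - b k))\<bar> \<le> n * (b k - a k)" .
    qed auto
    finally show ?thesis .
  qed
  then show ?thesis by (intro boundedI) (auto simp: real_norm_def)
next
  case (Suc j)
  obtain B where B: "\<And>x. \<bar>T j x\<bar> \<le> B" using T_bounded[of j] by (auto simp: bounded_iff)
  have "\<bar>TF c n K a b m x\<bar> \<le> \<bar>c / (2*n) * n^m\<bar> * (\<Sum>k\<in>K. 2*B)" for x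
  proof -
    have "\<bar>TF c n K a b m x\<bar> = \<bar>c / (2*n) * n^m\<bar> * \<bar>\<Sum>k\<in>K. T j (n*(x - a k)) - T j (n*(x - b k))\<bar>"
      using Suc by (simp add: TF_def G_def abs_mult)
    also have "\<dots> \<le> \<bar>c / (2*n) * n^m\<bar> * (\<Sum>k\<in>K. \<bar>T j (n*(x - a k)) - T j (n*(x - b k))\<bar>)"
      by (intro mult_left_mono sum_abs) auto
    also have "\<dots> \<le> \<bar>c / (2*n) * n^m\<bar> * (\<Sum>k\<in>K. 2*B)"
    proof (intro mult_left_mono sum_mono)
      fix k
      show "\<bar>T j (n*(x - a k)) - T j (n*(x - b k))\<bar> \<le> 2 * B"
        using B[of "n*(x - a k)"] B[of "n*(x - b k)"] by linarith
    qed auto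
    finally show ?thesis .
  qed
  then show ?thesis by (intro boundedI) (auto simp: real_norm_def)
qed

lemma testf_Cb:
  assumes "n > 0" and "\<And>k. k \<in> K \<Longrightarrow> a k \<le> b k"
  shows "testf c n K a b \<in> Cb_inf"
proof (rule chain_Cb_inf[of "TF c n K a b"])
  show "TF c n K a b 0 = testf c n K a b"
    by (auto simp: TF_def testf_def G_def fun_eq_iff)
qed (use TF_deriv TF_bounded[OF assms] in auto)

lemma testf_abs:
  assumes "n > 0" and "\<And>k. k \<in> K \<Longrightarrow> a k \<le> b k" "c \<ge> 0"
  shows "\<bar>testf c n K a b x\<bar> \<le> c / 2 * (\<Sum>k\<in>K. b k - a k)"
proof -
  have "\<bar>testf c n K a b x\<bar> = c / (2*n) * \<bar>\<Sum>k\<in>K. lc (n*(x - a k)) - lc (n*(x - b k))\<bar>"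
    using assms by (simp add: testf_def abs_mult)
  also have "\<dots> \<le> c / (2*n) * (\<Sum>k\<in>K. \<bar>lc (n*(x - a k)) - lc (n*(x - b k))\<bar>)"
    using assms by (intro mult_left_mono sum_abs) auto
  also have "\<dots> \<le> c / (2*n) * (\<Sum>k\<in>K. n * (b k - a k))"
  proof (intro mult_left_mono sum_mono)
    fix k assume "k \<in> K"
    have "\<bar>lc (n*(x - a k)) - lc (n*(x - b k))\<bar> \<le> \<bar>n*(x - a k) - n*(x - b k)\<bar>" by (rule lc_lip)
    also have "\<dots> = n * (b k - a k)" using assms \<open>k \<in> K\<close> by (simp add: algebra_simps abs_mult)
    finally show "\<bar>lc (n*(x - a k)) - lc (n*(x - b k))\<bar> \<le> n * (b k - a k)" .
  qed (use assms in auto)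
  also have "\<dots> = c / 2 * (\<Sum>k\<in>K. b k - a k)"
    using assms by (simp add: sum_distrib_left[symmetric])
  finally show ?thesis .
qed

lemma testf_deriv:
  "deriv (testf c n K a b) = (\<lambda>x. c / 2 * (\<Sum>k\<in>K. tanh (n*(x - a k)) - tanh (n*(x - b k))))"
proof
  fix x
  have "testf c n K a b = TF c n K a b 0" by (auto simp: TF_def testf_def G_def fun_eq_iff)
  then have "deriv (testf c n K a b) x = TF c n K a b 1 x"
    using TF_deriv DERIV_imp_deriv by (metis One_nat_def)
  also have "\<dots> = c / 2 * (\<Sum>k\<in>K. tanh (n*(x - a k)) - tanh (n*(x - b k)))"
    by (cases "n = 0") (simp_all add: TF_def G_def T0)
  finally show "deriv (testf c n K a b) x = c / 2 * (\<Sum>k\<in>K. tanh (n*(x - a k)) - tanh (n*(x - b k)))" .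
qed




lemma tanh_lim: "(\<lambda>i. tanh (real (Suc i) * y)) \<longlonglongrightarrow> sgn y"
proof -
  have R: "filterlim (\<lambda>i. real (Suc i)) at_top sequentially"
    by (rule filterlim_compose[OF filterlim_real_sequentially filterlim_Suc])
  have pos: "(\<lambda>i. tanh (real (Suc i) * z)) \<longlonglongrightarrow> 1" if "z > 0" for z
  proof -
    have "filterlim (\<lambda>i. z * real (Suc i)) at_top sequentially"
      by (rule filterlim_tendsto_pos_mult_at_top[OF tendsto_const that R])
    then have "filterlim (\<lambda>i. real (Suc i) * z) at_top sequentially" by (simp add: mult.commute)
    then show ?thesis by (rule filterlim_compose[OF tanh_real_at_top])
  qed
  show ?thesis
  proof (cases y "0::real" rule: linorder_cases)
    case less
    have "(\<lambda>i. - tanh (real (Suc i) * (-y))) \<longlonglongrightarrow> - 1"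
      using tendsto_minus[OF pos[of "-y"]] less by auto
    then show ?thesis using less by simp
  next
    case greater then show ?thesis using pos[of y] by simp
  qed simp
qed

locale L23 =
  fixes \<alpha> C :: real and \<nu> :: "real measure"
  assumes a0: "0 < \<alpha>" and a1: "\<alpha> \<le> 1" and C0: "0 < C"
    and P: "prob_space \<nu>" and S: "sets \<nu> = sets borel"
    and hyp: "\<And>\<phi>. \<phi> \<in> Cb_inf \<Longrightarrow> sup_norm \<phi> \<le> 1 \<Longrightarrow>
               integral\<^sup>L \<nu> (deriv \<phi>) \<le> C * sup_norm (deriv \<phi>) powr (1 - \<alpha>)"
begin

lemma meas_eq: "borel_measurable \<nu> = borel_measurable borel"
  using S by (rule measurable_cong_sets) simp

lemma space_eq: "space \<nu> = UNIV"
  using sets_eq_imp_space_eq[OF S] by simp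

lemma finite_nu: "finite_measure \<nu>"
  using P by (simp add: prob_space_def)

lemma nu_bounded_integrable:
  fixes f :: "real \<Rightarrow> real"
  assumes "f \<in> borel_measurable borel" "\<And>x. \<bar>f x\<bar> \<le> B"
  shows "integrable \<nu> f"
proof (rule finite_measure.integrable_const_bound[OF finite_nu, where B=B])
  show "AE x in \<nu>. norm (f x) \<le> B" using assms(2) by simp
  show "f \<in> borel_measurable \<nu>" using assms(1) meas_eq by blast
qed

lemma sup_norm_le:
  assumes "\<And>x. \<bar>f x\<bar> \<le> B"
  shows "sup_norm f \<le> B" "0 \<le> sup_norm f"
proof -
  show "sup_norm f \<le> B" unfolding sup_norm_def by (rule cSUP_least) (use assms in auto)
  have "bdd_above (range (\<lambda>t. \<bar>f t\<bar>))" by (rule bdd_aboveI2[where M=B]) (rule assms)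
  then have "\<bar>f 0\<bar> \<le> sup_norm f" unfolding sup_norm_def by (rule cSUP_upper[OF UNIV_I])
  then show "0 \<le> sup_norm f" by linarith
qed

lemma sgn_mono_real: "(x::real) \<le> y \<Longrightarrow> sgn x \<le> sgn y"
  by (auto simp: sgn_if)

lemma key:
  fixes h a0 :: real
  assumes K: "finite K" "K \<noteq> {}" and h: "h > 0"
  shows "measure \<nu> (\<Union>k\<in>K. {a0 + real k*h <..< a0 + real (k+1)*h}) \<le> C * (real (card K) * h) powr \<alpha>"
proof -
  define L where "L = real (card K) * h"
  have L0: "L > 0" using K h by (simp add: L_def card_gt_0_iff)
  define c where "c = 2 / L"
  have c0: "c > 0" using L0 by (simp add: c_def)
  define a where "a = (\<lambda>k::nat. a0 + k*h)"
  define b where "b = (\<lambda>k::nat. a0 + (k+1)*h)"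
  have ab: "a k \<le> b k" for k using h by (simp add: a_def b_def algebra_simps)
  have ba: "b k = a (Suc k)" for k by (simp add: a_def b_def)
  have amono: "a k \<le> a (Suc k)" for k using h by (simp add: a_def algebra_simps)
  have sumab: "(\<Sum>k\<in>K. b k - a k) = L" by (simp add: a_def b_def L_def algebra_simps)
  define U where "U = (\<Union>k\<in>K. {a k <..< b k})"
  have U_eq: "(\<Union>k\<in>K. {a0 + real k*h <..< a0 + real (k+1)*h}) = U" by (simp add: U_def a_def b_def add.commute)
  define \<psi> where "\<psi> = (\<lambda>i::nat. \<lambda>x. c/2 * (\<Sum>k\<in>K. tanh (real (Suc i) * (x - a k)) - tanh (real (Suc i) * (x - b k))))"
  define \<psi>I where "\<psi>I = (\<lambda>x. c/2 * (\<Sum>k\<in>K. sgn (x - a k) - sgn (x - b k)))"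
  have psi_bounds: "0 \<le> \<psi> i x \<and> \<psi> i x \<le> c" for i x
  proof -
    let ?n = "real (Suc i)"
    define g where "g = (\<lambda>k. tanh (?n * (x - a k)))"
    have nonneg: "0 \<le> g k - g (Suc k)" for k
      using amono[of k] by (simp add: g_def mult_left_mono)
    have Ksub: "K \<subseteq> {..<Suc (Max K)}" using K by (auto simp: le_imp_less_Suc)
    have "(\<Sum>k\<in>K. g k - g (Suc k)) \<le> (\<Sum>k<Suc (Max K). g k - g (Suc k))"
      by (rule sum_mono2) (use Ksub nonneg in auto)
    also have "\<dots> = g 0 - g (Suc (Max K))" by (rule sum_lessThan_telescope')
    also have "\<dots> \<le> 2" using tanh_real_bounds[of "?n * (x - a 0)"] tanh_real_bounds[of "?n * (x - a (Suc (Max K)))"]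
      by (simp add: g_def)
    finally have up: "(\<Sum>k\<in>K. g k - g (Suc k)) \<le> 2" .
    have lo: "0 \<le> (\<Sum>k\<in>K. g k - g (Suc k))" by (rule sum_nonneg) (use nonneg in auto)
    have "\<psi> i x = c/2 * (\<Sum>k\<in>K. g k - g (Suc k))" by (simp add: \<psi>_def g_def ba)
    moreover have "c/2 * (\<Sum>k\<in>K. g k - g (Suc k)) \<le> c/2 * 2" using up c0 by (intro mult_left_mono) auto
    moreover have "0 \<le> c/2 * (\<Sum>k\<in>K. g k - g (Suc k))" using lo c0 by simp
    ultimately show ?thesis by simp
  qed
  have psi_meas: "\<psi> i \<in> borel_measurable \<nu>" for i
    unfolding meas_eq \<psi>_def
    by (intro borel_measurable_continuous_onI continuous_on_mult continuous_on_const continuous_on_sum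
          continuous_on_diff continuous_on_tanh continuous_on_id) auto
  have psiI_meas: "\<psi>I \<in> borel_measurable \<nu>"
    unfolding meas_eq \<psi>I_def by measurable
  have int_le: "integral\<^sup>L \<nu> (\<psi> i) \<le> C * c powr (1-\<alpha>)" for i
  proof -
    let ?\<phi> = "testf c (real (Suc i)) K a b"
    have "?\<phi> \<in> Cb_inf" by (rule testf_Cb) (auto simp: ab)
    moreover have "sup_norm ?\<phi> \<le> 1"
    proof (rule sup_norm_le)
      fix x
      have "\<bar>?\<phi> x\<bar> \<le> c / 2 * (\<Sum>k\<in>K. b k - a k)" by (rule testf_abs) (use ab c0 in auto)
      also have "\<dots> = 1" using sumab L0 by (simp add: c_def)
      finally show "\<bar>?\<phi> x\<bar> \<le> 1" .
    qed
    ultimately have "integral\<^sup>L \<nu> (deriv ?\<phi>) \<le> C * sup_norm (deriv ?\<phi>) powr (1 - \<alpha>)" by (rule hyp)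
    moreover have "deriv ?\<phi> = \<psi> i" by (simp add: testf_deriv \<psi>_def)
    moreover have "sup_norm (\<psi> i) \<le> c" "0 \<le> sup_norm (\<psi> i)"
      using sup_norm_le[of "\<psi> i" c] psi_bounds by auto
    ultimately have I: "integral\<^sup>L \<nu> (\<psi> i) \<le> C * sup_norm (\<psi> i) powr (1 - \<alpha>)"
      and s1: "sup_norm (\<psi> i) \<le> c" and s0: "0 \<le> sup_norm (\<psi> i)" by auto
    have "sup_norm (\<psi> i) powr (1-\<alpha>) \<le> c powr (1-\<alpha>)" by (rule powr_mono2) (use a1 s1 s0 in auto)
    then have "C * sup_norm (\<psi> i) powr (1-\<alpha>) \<le> C * c powr (1-\<alpha>)" using C0 by (intro mult_left_mono) auto
    then show ?thesis using I by linarith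
  qed
  have lim: "(\<lambda>i. integral\<^sup>L \<nu> (\<psi> i)) \<longlonglongrightarrow> integral\<^sup>L \<nu> \<psi>I"
  proof (rule integral_dominated_convergence[where w="\<lambda>_. c"])
    show "integrable \<nu> (\<lambda>_. c)" using finite_nu by (simp add: finite_measure.integrable_const)
    show "AE x in \<nu>. (\<lambda>i. \<psi> i x) \<longlonglongrightarrow> \<psi>I x"
      unfolding \<psi>_def \<psi>I_def by (intro AE_I2 tendsto_mult_left tendsto_sum tendsto_diff tanh_lim)
    show "AE x in \<nu>. norm (\<psi> i x) \<le> c" for i using psi_bounds[of i] by (intro AE_I2) auto
  qed (use psi_meas psiI_meas in auto)
  have I_le: "integral\<^sup>L \<nu> \<psi>I \<le> C * c powr (1-\<alpha>)"
    by (rule LIMSEQ_le_const2[OF lim]) (use int_le in auto)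
  have ind_le: "c * indicator U x \<le> \<psi>I x" for x
  proof -
    have nn: "0 \<le> sgn (x - a k) - sgn (x - b k)" for k using sgn_mono_real[of "x - b k" "x - a k"] ab[of k] by auto
    show ?thesis
    proof (cases "x \<in> U")
      case True
      then obtain k0 where k0: "k0 \<in> K" "a k0 < x" "x < b k0" by (auto simp: U_def)
      have "2 = sgn (x - a k0) - sgn (x - b k0)" using k0 by simp
      also have "\<dots> \<le> (\<Sum>k\<in>K. sgn (x - a k) - sgn (x - b k))"
        by (rule member_le_sum) (use k0 K nn in auto)
      finally show ?thesis using True c0 by (simp add: \<psi>I_def)
    next
      case False
      have "0 \<le> (\<Sum>k\<in>K. sgn (x - a k) - sgn (x - b k))" by (rule sum_nonneg) (use nn in auto)
      then show ?thesis using c0 False by (simp add: \<psi>I_def)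
    qed
  qed
  have "open U" unfolding U_def by (intro open_UN) auto
  then have U_borel: "U \<in> sets borel" by (rule borel_open)
  then have U_meas: "U \<in> sets \<nu>" using S by simp
  have "c * measure \<nu> U = integral\<^sup>L \<nu> (\<lambda>x. c * indicator U x)"
    using U_meas space_eq by (simp add: integral_mult_right_zero)
  also have "\<dots> \<le> integral\<^sup>L \<nu> \<psi>I"
  proof (rule integral_mono)
    show "integrable \<nu> (\<lambda>x. c * indicator U x)"
    proof (rule nu_bounded_integrable[where B=c])
      show "(\<lambda>x. c * indicator U x) \<in> borel_measurable borel"
        by (intro borel_measurable_times borel_measurable_const borel_measurable_indicator U_borel)
      show "\<bar>c * indicator U x\<bar> \<le> c" for x using c0 by (simp add: indicator_def)
    qed
    show "integrable \<nu> \<psi>I"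
    proof (rule nu_bounded_integrable[where B=c])
      show "\<psi>I \<in> borel_measurable borel" using psiI_meas meas_eq by blast
      fix x
      have "(\<lambda>i. \<psi> i x) \<longlonglongrightarrow> \<psi>I x" unfolding \<psi>_def \<psi>I_def by (intro tendsto_mult_left tendsto_sum tendsto_diff tanh_lim)
      then have "\<bar>\<psi>I x\<bar> \<le> c"
        by (rule LIMSEQ_le_const2[OF tendsto_rabs]) (use psi_bounds in auto)
      then show "\<bar>\<psi>I x\<bar> \<le> c" .
    qed
  qed (use ind_le in auto)
  also have "\<dots> \<le> C * c powr (1-\<alpha>)" by (rule I_le)
  finally have "c * measure \<nu> U \<le> C * c powr (1-\<alpha>)" .
  then have "measure \<nu> U \<le> C * c powr (1-\<alpha>) / c" using c0 by (simp add: pos_le_divide_eq mult.commute)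
  also have "C * c powr (1-\<alpha>) / c = C * (L/2) powr \<alpha>"
  proof -
    have e1: "c powr (1-\<alpha>) = c / c powr \<alpha>" using c0 by (simp add: powr_diff)
    have e2: "L/2 = 1/c" by (simp add: c_def)
    have e3: "(1/c) powr \<alpha> = 1 / c powr \<alpha>" using c0 by (simp add: powr_divide)
    show ?thesis unfolding e1 e2 e3 using c0 by simp
  qed
  also have "\<dots> \<le> C * L powr \<alpha>" using C0 L0 a0 by (intro mult_left_mono powr_mono2) auto
  finally have "measure \<nu> U \<le> C * L powr \<alpha>" .
  then show ?thesis by (simp only: U_eq L_def)
qed

end



lemma lim_powr_le:
  fixes m l D a :: real
  assumes "0 \<le> l" "0 < a" and le: "\<And>e. e > 0 \<Longrightarrow> m \<le> D * (l + e) powr a"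
  shows "m \<le> D * l powr a"
proof (rule tendsto_le[OF trivial_limit_at_right_real])
  have "((\<lambda>e. l + e) \<longlongrightarrow> l + 0) (at_right 0)"
    by (intro tendsto_add tendsto_const tendsto_ident_at)
  then have t: "((\<lambda>e. l + e) \<longlongrightarrow> l) (at_right 0)" by simp
  have ev: "eventually (\<lambda>e. 0 \<le> l + e) (at_right (0::real))"
    using eventually_at_right_less[of "0::real"] by eventually_elim (use assms(1) in simp)
  show "((\<lambda>e. D * (l + e) powr a) \<longlongrightarrow> D * l powr a) (at_right 0)"
    by (intro tendsto_mult_left tendsto_powr'[OF t tendsto_const]) (use assms(2) ev in auto)
  show "((\<lambda>e. m) \<longlongrightarrow> m) (at_right 0)" by simp
  show "eventually (\<lambda>e. m \<le> D * (l + e) powr a) (at_right (0::real))"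
    using eventually_at_right_less[of "0::real"] by eventually_elim (rule le)
qed

sublocale L23 \<subseteq> N: prob_space \<nu> by (rule P)

context L23
begin

lemma key1:
  fixes a0 h :: real assumes "h > 0"
  shows "measure \<nu> {a0<..<a0+h} \<le> C * h powr \<alpha>"
  using key[of "{0}" h a0] assms by simp

lemma atom0: "measure \<nu> {x} = 0"
proof -
  have H: "measure \<nu> {x} \<le> C * (0 + e) powr \<alpha>" if e: "e > 0" for e
  proof -
    have sub: "{x} \<subseteq> {x - e/2 <..< (x - e/2) + e}" using e by simp
    have "{x - e/2 <..< (x - e/2) + e} \<in> sets \<nu>" unfolding S by simp
    then have "measure \<nu> {x} \<le> measure \<nu> {x - e/2 <..< (x - e/2) + e}"
      by (rule N.finite_measure_mono[OF sub])
    also have "\<dots> \<le> C * e powr \<alpha>" by (rule key1) (use e in auto)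
    finally show ?thesis by simp
  qed
  have "measure \<nu> {x} \<le> C * 0 powr \<alpha>" by (rule lim_powr_le[OF order.refl a0 H])
  then have "measure \<nu> {x} \<le> 0" by simp
  then show ?thesis using measure_nonneg[of \<nu> "{x}"] by linarith
qed

lemma finite_null:
  assumes "finite E" shows "measure \<nu> E = 0"
proof -
  have "emeasure \<nu> E = (\<Sum>x\<in>E. emeasure \<nu> {x})"
    by (rule emeasure_eq_sum_singleton) (use assms in \<open>auto simp: S\<close>)
  also have "\<dots> = 0" using atom0 N.emeasure_eq_measure by simp
  finally show ?thesis by (simp add: measure_def)
qed

lemma cell_point:
  fixes x :: real and N :: nat
  assumes x: "\<bar>x\<bar> < real (Suc N)"
  defines "h \<equiv> 1 / real (Suc N)" and "a \<equiv> - real (Suc N)"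
  obtains k where "k < 2 * Suc N * Suc N" "a + real k * h \<le> x" "x < a + real (k+1) * h"
proof -
  have h0: "h > 0" by (simp add: h_def)
  define t where "t = (x - a) / h"
  have t_eq: "t = (x + real (Suc N)) * real (Suc N)" by (simp add: t_def a_def h_def)
  have t0: "t > 0" using x by (simp add: t_eq)
  define k where "k = nat \<lfloor>t\<rfloor>"
  have rk: "real k = of_int \<lfloor>t\<rfloor>" using t0 by (simp add: k_def)
  have k1: "real k \<le> t" using rk of_int_floor_le[of t] by simp
  have k2: "t < real k + 1" using rk real_of_int_floor_add_one_gt[of t] by simp
  have "real k * h \<le> x - a" using k1 h0 by (simp add: t_def pos_le_divide_eq)
  then have A: "a + real k * h \<le> x" by simp
  have "x - a < (real k + 1) * h" using k2 h0 by (simp add: t_def pos_divide_less_eq)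
  then have B: "x < a + real (k+1) * h" by (simp add: add.commute)
  have "t < 2 * real (Suc N) * real (Suc N)"
  proof -
    have "x + real (Suc N) < 2 * real (Suc N)" using x by simp
    then show ?thesis unfolding t_eq by (intro mult_strict_right_mono) auto
  qed
  moreover have "real (2 * Suc N * Suc N) = 2 * real (Suc N) * real (Suc N)" by (simp only: of_nat_mult of_nat_numeral)
  ultimately have "real k < real (2 * Suc N * Suc N)" using k1 by linarith
  then have "k < 2 * Suc N * Suc N" by (simp only: of_nat_less_iff)
  then show ?thesis using A B that by blast
qed

lemma Ioo_fin: "emeasure lborel {l<..<u::real} \<noteq> \<infinity>"
  by (cases "l \<le> u") auto

lemma open_bound:
  assumes U: "open U" "emeasure lborel U < \<infinity>"
  shows "measure \<nu> U \<le> C * measure lborel U powr \<alpha>"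
proof -
  define h where "h = (\<lambda>N::nat. 1 / real (Suc N))"
  define a where "a = (\<lambda>N::nat. - real (Suc N))"
  define M where "M = (\<lambda>N::nat. 2 * Suc N * Suc N)"
  define KN where "KN = (\<lambda>N. {k. k < M N \<and> {a N + real k * h N .. a N + real (k+1) * h N} \<subseteq> U})"
  define W where "W = (\<lambda>N. \<Union>k\<in>KN N. {a N + real k * h N ..< a N + real (k+1) * h N})"
  define Op where "Op = (\<lambda>N. \<Union>k\<in>KN N. {a N + real k * h N <..< a N + real (k+1) * h N})"
  define E where "E = (\<lambda>N. (\<lambda>k. a N + real k * h N) ` KN N)"
  have hpos: "h N > 0" for N by (simp add: h_def)
  have finK: "finite (KN N)" for N
    by (rule finite_subset[of _ "{..<M N}"]) (auto simp: KN_def)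
  have UB: "U \<in> sets borel" using U(1) by (rule borel_open)
  have Ufm: "U \<in> fmeasurable lborel" using UB U(2) by (simp add: fmeasurable_def)
  have W_sub: "W N \<subseteq> U" for N unfolding W_def KN_def by auto
  have O_sub: "Op N \<subseteq> U" for N unfolding Op_def KN_def by auto
  have W_sets: "W N \<in> sets borel" for N unfolding W_def by (intro sets.finite_UN finK) simp
  have O_sets: "Op N \<in> sets borel" for N unfolding Op_def by (intro sets.finite_UN finK) simp
  have WOE: "W N \<subseteq> Op N \<union> E N" for N
  proof
    fix y assume "y \<in> W N"
    then obtain k where k: "k \<in> KN N" "a N + real k * h N \<le> y" "y < a N + real (k+1) * h N"
      by (auto simp: W_def)
    show "y \<in> Op N \<union> E N"
    proof (cases "y = a N + real k * h N")
      case True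
      then have "y \<in> E N" unfolding E_def by (rule image_eqI[OF _ k(1)])
      then show ?thesis by blast
    next
      case False
      then have "a N + real k * h N < y" using k(2) by linarith
      then have "y \<in> {a N + real k * h N <..< a N + real (k+1) * h N}" using k(3) by simp
      then have "y \<in> Op N" unfolding Op_def by (rule UN_I[OF k(1)])
      then show ?thesis by blast
    qed
  qed
  have nuW: "measure \<nu> (W N) \<le> measure \<nu> (Op N)" for N
  proof -
    have E_sets: "E N \<in> sets \<nu>" unfolding S by (rule borel_closed[OF finite_imp_closed]) (simp add: E_def finK)
    have "measure \<nu> (W N) \<le> measure \<nu> (Op N \<union> E N)"
      by (rule N.finite_measure_mono[OF WOE]) (use O_sets E_sets in \<open>auto simp: S\<close>)
    also have "\<dots> \<le> measure \<nu> (Op N) + measure \<nu> (E N)"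
      by (rule measure_subadditive) (use O_sets E_sets in \<open>auto simp: S N.emeasure_finite\<close>)
    also have "measure \<nu> (E N) = 0" by (rule finite_null) (simp add: E_def finK)
    finally show ?thesis by simp
  qed
  have nuO: "measure \<nu> (Op N) \<le> C * (real (card (KN N)) * h N) powr \<alpha>" for N
  proof (cases "KN N = {}")
    case True then show ?thesis by (simp add: Op_def)
  next
    case False
    show ?thesis unfolding Op_def by (rule key[OF finK False hpos])
  qed
  have lamO: "measure lborel (Op N) = real (card (KN N)) * h N" for N
  proof -
    have "measure lborel (Op N) = (\<Sum>k\<in>KN N. measure lborel {a N + real k * h N <..< a N + real (k+1) * h N})"
      unfolding Op_def
    proof (rule measure_finite_Union[OF finK])
      show "disjoint_family_on (\<lambda>k. {a N + real k * h N <..< a N + real (k+1) * h N}) (KN N)"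
      proof (unfold disjoint_family_on_def, intro ballI impI)
        fix j k assume jk: "j \<in> KN N" "k \<in> KN N" "j \<noteq> k"
        show "{a N + real j * h N <..< a N + real (j+1) * h N} \<inter> {a N + real k * h N <..< a N + real (k+1) * h N} = {}"
        proof (rule ccontr)
          assume "\<not> ?thesis"
          then obtain y where "y \<in> {a N + real j * h N <..< a N + real (j+1) * h N} \<inter> {a N + real k * h N <..< a N + real (k+1) * h N}"
            by blast
          then have y: "a N + real j * h N < y" "y < a N + real (j+1) * h N"
            "a N + real k * h N < y" "y < a N + real (k+1) * h N" by auto
          have "real j * h N < real (k+1) * h N" using y by linarith
          then have "real j < real (k+1)" by (rule mult_right_less_imp_less) (rule less_imp_le[OF hpos])
          then have 1: "j < k + 1" by (simp only: of_nat_less_iff)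
          have "real k * h N < real (j+1) * h N" using y by linarith
          then have "real k < real (j+1)" by (rule mult_right_less_imp_less) (rule less_imp_le[OF hpos])
          then have 2: "k < j + 1" by (simp only: of_nat_less_iff)
          show False using 1 2 jk(3) by linarith
        qed
      qed
      show "(\<lambda>k. {a N + real k * h N <..< a N + real (k+1) * h N}) ` KN N \<subseteq> sets lborel" by auto
      show "\<And>k. k \<in> KN N \<Longrightarrow> emeasure lborel {a N + real k * h N <..< a N + real (k+1) * h N} \<noteq> \<infinity>"
        by (rule Ioo_fin)
    qed
    also have "\<dots> = (\<Sum>k\<in>KN N. h N)"
    proof (rule sum.cong[OF refl])
      fix k assume "k \<in> KN N"
      have le: "a N + real k * h N \<le> a N + real (k+1) * h N" using hpos[of N] by (simp add: algebra_simps)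
      show "measure lborel {a N + real k * h N <..< a N + real (k+1) * h N} = h N"
        unfolding measure_lborel_Ioo[OF le] by (simp add: algebra_simps)
    qed
    also have "\<dots> = real (card (KN N)) * h N" by simp
    finally show ?thesis .
  qed
  have Wle: "measure \<nu> (W N) \<le> C * measure lborel U powr \<alpha>" for N
  proof -
    have "real (card (KN N)) * h N \<le> measure lborel U"
      unfolding lamO[symmetric] by (rule measure_mono_fmeasurable[OF O_sub _ Ufm]) (simp add: O_sets)
    then have "(real (card (KN N)) * h N) powr \<alpha> \<le> measure lborel U powr \<alpha>"
      using hpos[of N] a0 by (intro powr_mono2) auto
    then have "C * (real (card (KN N)) * h N) powr \<alpha> \<le> C * measure lborel U powr \<alpha>"
      using C0 by (intro mult_left_mono) auto
    then show ?thesis using nuW[of N] nuO[of N] by linarith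
  qed
  have ptw: "(\<lambda>N. indicator (W N) x) \<longlonglongrightarrow> (indicator U x :: real)" for x
  proof (cases "x \<in> U")
    case False
    then have "\<And>N. x \<notin> W N" using W_sub by blast
    then show ?thesis using False by simp
  next
    case True
    obtain e where e: "e > 0" "ball x e \<subseteq> U" using U(1) True open_contains_ball by blast
    obtain N0 where N0: "inverse (real (Suc N0)) < e" using reals_Archimedean[OF e(1)] by blast
    obtain N1 where N1: "\<bar>x\<bar> < real N1" using reals_Archimedean2 by blast
    have "eventually (\<lambda>N. x \<in> W N) sequentially"
    proof (rule eventually_sequentiallyI[of "max N0 N1"])
      fix N assume NN: "max N0 N1 \<le> N"
      have xN: "\<bar>x\<bar> < real (Suc N)" using N1 NN by linarith
      have "h N \<le> inverse (real (Suc N0))" using NN by (simp add: h_def inverse_eq_divide frac_le)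
      then have he: "h N < e" using N0 by linarith
      obtain k where k: "k < M N" "a N + real k * h N \<le> x" "x < a N + real (k+1) * h N"
        using cell_point[OF xN] unfolding M_def a_def h_def by blast
      have "{a N + real k * h N .. a N + real (k+1) * h N} \<subseteq> ball x e"
      proof
        fix y assume y: "y \<in> {a N + real k * h N .. a N + real (k+1) * h N}"
        have "real (k+1) * h N = real k * h N + h N" by (simp add: algebra_simps)
        then have "\<bar>y - x\<bar> < e" using y k he by auto
        then show "y \<in> ball x e" by (simp add: dist_real_def abs_minus_commute)
      qed
      then have "k \<in> KN N" using k(1) e(2) by (auto simp: KN_def)
      then show "x \<in> W N" using k by (auto simp: W_def)
    qed
    then have "eventually (\<lambda>N. indicator (W N) x = (indicator U x :: real)) sequentially"
      by eventually_elim (use True in simp)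
    then show ?thesis by (rule tendsto_eventually)
  qed
  have lim: "(\<lambda>N. integral\<^sup>L \<nu> (indicator (W N) :: real \<Rightarrow> real)) \<longlonglongrightarrow> integral\<^sup>L \<nu> (indicator U)"
  proof (rule integral_dominated_convergence[where w="\<lambda>_. 1"])
    show "integrable \<nu> (\<lambda>_. 1::real)" by simp
    show "AE x in \<nu>. (\<lambda>N. indicator (W N) x) \<longlonglongrightarrow> (indicator U x :: real)" using ptw by simp
    show "AE x in \<nu>. norm (indicator (W N) x :: real) \<le> 1" for N by (simp add: indicator_def)
    show "(indicator U :: real \<Rightarrow> real) \<in> borel_measurable \<nu>" unfolding meas_eq using UB by simp
    show "(indicator (W N) :: real \<Rightarrow> real) \<in> borel_measurable \<nu>" for N unfolding meas_eq using W_sets by simp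
  qed
  then have lim': "(\<lambda>N. measure \<nu> (W N)) \<longlonglongrightarrow> measure \<nu> U" by (simp add: space_eq)
  show ?thesis by (rule LIMSEQ_le_const2[OF lim']) (use Wle in auto)
qed

lemma borel_bound:
  assumes A: "A \<in> sets borel" "emeasure lborel A < \<infinity>"
  shows "measure \<nu> A \<le> C * measure lborel A powr \<alpha>"
proof (rule lim_powr_le[OF measure_nonneg a0])
  fix e :: real assume e: "e > 0"
  obtain V where V: "open V" "A \<subseteq> V" "emeasure lborel (V - A) < e"
    using outer_regular_lborel[OF A(1) e] by blast
  have VB: "V \<in> sets borel" using V(1) by (rule borel_open)
  have VA_sets: "V - A \<in> sets borel" using VB A(1) by auto
  have "emeasure lborel (V - A) < \<infinity>" unfolding infinity_ennreal_def using V(3) ennreal_less_top[of e] by (rule less_trans)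
  then have VA_fin: "emeasure lborel (V - A) \<noteq> top" by simp
  have A_fin: "emeasure lborel A \<noteq> top" using A(2) by simp
  have "ennreal (measure lborel (V - A)) < ennreal e"
    using V(3) emeasure_eq_ennreal_measure[OF VA_fin] by simp
  then have VAm: "measure lborel (V - A) < e" by (simp add: ennreal_less_iff)
  have Veq: "A \<union> (V - A) = V" using V(2) by blast
  have "measure lborel (A \<union> (V - A)) = measure lborel A + measure lborel (V - A)"
    by (rule measure_Union) (use A_fin VA_fin A(1) VA_sets in auto)
  then have mV: "measure lborel V = measure lborel A + measure lborel (V - A)" by (simp only: Veq)
  have "emeasure lborel (A \<union> (V - A)) \<le> emeasure lborel A + emeasure lborel (V - A)"
    by (rule emeasure_subadditive) (use A(1) VA_sets in auto)
  also have "\<dots> < \<infinity>" using A_fin VA_fin by (simp add: less_top)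
  finally have V_fin: "emeasure lborel V < \<infinity>" by (simp only: Veq)
  have "measure \<nu> A \<le> measure \<nu> V"
    by (rule N.finite_measure_mono[OF V(2)]) (simp add: S VB)
  also have "\<dots> \<le> C * measure lborel V powr \<alpha>" by (rule open_bound[OF V(1) V_fin])
  also have "\<dots> \<le> C * (measure lborel A + e) powr \<alpha>"
  proof -
    have "measure lborel V powr \<alpha> \<le> (measure lborel A + e) powr \<alpha>"
      using VAm mV a0 by (intro powr_mono2) auto
    then show ?thesis using C0 by (intro mult_left_mono) auto
  qed
  finally show "measure \<nu> A \<le> C * (measure lborel A + e) powr \<alpha>" .
qed

end



lemma powr_int_nn:
  fixes p c :: real assumes p: "p > 1" and c: "c \<ge> 0"
  shows "(\<integral>\<^sup>+t. ennreal (p * t powr (p-1)) * indicator {0..c} t \<partial>lborel) = ennreal (c powr p)"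
proof -
  have "((\<lambda>t. t powr (p-1)) has_integral (c powr (p - 1 + 1) / (p - 1 + 1))) {0..c}"
    by (rule has_integral_powr_from_0) (use p c in auto)
  then have "((\<lambda>t. p * t powr (p-1)) has_integral (p * (c powr p / p))) {0..c}"
    by (intro has_integral_mult_right) simp
  then have "((\<lambda>t. p * t powr (p-1)) has_integral c powr p) {0..c}" using p by simp
  then have hi: "((\<lambda>t. if t \<in> {0..c} then p * t powr (p-1) else 0) has_integral c powr p) UNIV"
    by (subst has_integral_restrict_UNIV)
  have "integral\<^sup>N lborel (\<lambda>t. if t \<in> {0..c} then p * t powr (p-1) else 0) = c powr p"
    by (rule nn_integral_has_integral_lborel[OF _ _ hi]) (use p in auto)
  moreover have "(\<integral>\<^sup>+t. ennreal (p * t powr (p-1)) * indicator {0..c} t \<partial>lborel)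
      = integral\<^sup>N lborel (\<lambda>t. if t \<in> {0..c} then p * t powr (p-1) else 0)"
    by (rule nn_integral_cong) (simp add: indicator_def)
  ultimately show ?thesis by simp
qed

lemma layer_cake_p:
  fixes \<rho> :: "real \<Rightarrow> real" and p :: real
  assumes \<rho>m[measurable]: "\<rho> \<in> borel_measurable borel" and \<rho>0: "\<And>x. 0 \<le> \<rho> x" and p: "p > 1"
  shows "(\<integral>\<^sup>+x. ennreal (\<rho> x powr p) \<partial>lborel)
     = (\<integral>\<^sup>+t. ennreal (p * t powr (p-1)) * indicator {0..} t * emeasure lborel {x. t \<le> \<rho> x} \<partial>lborel)"
proof -
  define f where "f = (\<lambda>x t. ennreal (p * t powr (p-1)) * indicator {0..\<rho> x} t)"
  have fm: "case_prod f \<in> borel_measurable (lborel \<Otimes>\<^sub>M lborel)"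
  proof -
    have "case_prod f = (\<lambda>z. if 0 \<le> snd z \<and> snd z \<le> \<rho> (fst z) then ennreal (p * snd z powr (p-1)) else 0)"
      by (auto simp: f_def fun_eq_iff indicator_def)
    also have "\<dots> \<in> borel_measurable (lborel \<Otimes>\<^sub>M lborel)" by measurable
    finally show ?thesis .
  qed
  have "(\<integral>\<^sup>+x. ennreal (\<rho> x powr p) \<partial>lborel) = (\<integral>\<^sup>+x. (\<integral>\<^sup>+t. f x t \<partial>lborel) \<partial>lborel)"
    by (rule nn_integral_cong) (simp add: f_def powr_int_nn[OF p \<rho>0])
  also have "\<dots> = (\<integral>\<^sup>+t. (\<integral>\<^sup>+x. f x t \<partial>lborel) \<partial>lborel)"
    by (rule lborel_pair.Fubini'[symmetric]) (rule fm)
  also have "\<dots> = (\<integral>\<^sup>+t. ennreal (p * t powr (p-1)) * indicator {0..} t * emeasure lborel {x. t \<le> \<rho> x} \<partial>lborel)"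
  proof (rule nn_integral_cong)
    fix t
    have "(\<integral>\<^sup>+x. f x t \<partial>lborel) = (\<integral>\<^sup>+x. (ennreal (p * t powr (p-1)) * indicator {0..} t) * indicator {x. t \<le> \<rho> x} x \<partial>lborel)"
      by (rule nn_integral_cong) (simp add: f_def indicator_def)
    also have "\<dots> = ennreal (p * t powr (p-1)) * indicator {0..} t * emeasure lborel {x. t \<le> \<rho> x}"
      by (rule nn_integral_cmult_indicator) measurable
    finally show "(\<integral>\<^sup>+x. f x t \<partial>lborel) = ennreal (p * t powr (p-1)) * indicator {0..} t * emeasure lborel {x. t \<le> \<rho> x}" .
  qed
  finally show ?thesis .
qed




lemma pw_bound:
  fixes t m p a C :: real
  assumes t: "t > 0" and m: "0 \<le> m" and tm1: "t * m \<le> 1" and tmC: "t * m \<le> C * m powr a"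
    and C: "C > 0" and a: "0 < a" "a \<le> 1" and p: "p > 1" and pa: "a = 1 \<or> p < 1 / (1 - a)"
  shows "p * t powr (p-1) * m \<le>
     (if t \<le> C powr (1/a) then p * t powr (p-2)
      else if a = 1 then 0 else p * C powr (1/(1-a)) * t powr (p - 1 - 1/(1-a)))"
proof (cases "t \<le> C powr (1/a)")
  case True
  have "m \<le> 1 / t" using tm1 t by (simp add: field_simps)
  then have "p * t powr (p-1) * m \<le> p * t powr (p-1) * (1/t)"
    using p t by (intro mult_left_mono) auto
  also have "\<dots> = p * t powr (p-2)"
  proof -
    have "t powr (p-2) = t powr ((p-1) - 1)" by simp
    also have "\<dots> = t powr (p-1) / t powr 1" by (rule powr_diff)
    also have "\<dots> = t powr (p-1) * (1/t)" using t by simp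
    finally show ?thesis by simp
  qed
  finally show ?thesis using True by simp
next
  case False
  then have tt0: "t > C powr (1/a)" by simp
  show ?thesis
  proof (cases "a = 1")
    case True
    have "C powr (1/a) = C" using True C by simp
    then have tC: "t > C" using tt0 by simp
    have "t * m \<le> C * m" using tmC True m by (cases "m = 0") auto
    have "m = 0"
    proof (rule ccontr)
      assume "m \<noteq> 0" then have "m > 0" using m by simp
      then have "0 < (t - C) * m" using tC by simp
      then show False using \<open>t * m \<le> C * m\<close> by (simp add: algebra_simps)
    qed
    then show ?thesis using False True by simp
  next
    case False
    then have a1: "a < 1" using a by simp
    define \<beta> where "\<beta> = 1 / (1 - a)"
    have b0: "\<beta> > 0" using a1 by (simp add: \<beta>_def)
    show ?thesis
    proof (cases "m = 0")
      case True then show ?thesis using tt0 False p C t by simp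
    next
      case False
      then have m0: "m > 0" using m by simp
      have "m powr (1 - a) = m / m powr a" using m0 by (simp add: powr_diff)
      also have "\<dots> \<le> C / t"
        using tmC m0 t by (simp add: divide_simps mult.commute)
      finally have h1: "m powr (1 - a) \<le> C / t" .
      have "m = (m powr (1 - a)) powr \<beta>" using m0 a1 by (simp add: powr_powr \<beta>_def)
      also have "\<dots> \<le> (C / t) powr \<beta>" by (rule powr_mono2) (use b0 h1 in auto)
      also have "\<dots> = C powr \<beta> * t powr (- \<beta>)" using C t by (simp add: powr_divide powr_minus_divide)
      finally have h2: "m \<le> C powr \<beta> * t powr (- \<beta>)" .
      have "p * t powr (p-1) * m \<le> p * t powr (p-1) * (C powr \<beta> * t powr (- \<beta>))"
        using p t by (intro mult_left_mono h2) auto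
      also have "\<dots> = p * C powr \<beta> * t powr (p - 1 - \<beta>)"
        using t by (simp add: powr_add[symmetric] algebra_simps)
      finally show ?thesis using tt0 \<open>a \<noteq> 1\<close> by (simp add: \<beta>_def)
    qed
  qed
qed


lemma nn_int_powr_0c:
  fixes a c k :: real assumes a: "a > -1" and c: "c \<ge> 0" and k: "k \<ge> 0"
  shows "(\<integral>\<^sup>+t. ennreal (k * t powr a) * indicator {0..c} t \<partial>lborel) = ennreal (k * (c powr (a+1) / (a+1)))"
proof -
  have "((\<lambda>t. t powr a) has_integral (c powr (a + 1) / (a + 1))) {0..c}"
    by (rule has_integral_powr_from_0) (use a c in auto)
  then have "((\<lambda>t. k * t powr a) has_integral (k * (c powr (a+1) / (a+1)))) {0..c}"
    by (intro has_integral_mult_right)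
  then have hi: "((\<lambda>t. if t \<in> {0..c} then k * t powr a else 0) has_integral (k * (c powr (a+1) / (a+1)))) UNIV"
    by (subst has_integral_restrict_UNIV)
  have "integral\<^sup>N lborel (\<lambda>t. if t \<in> {0..c} then k * t powr a else 0) = k * (c powr (a+1) / (a+1))"
    by (rule nn_integral_has_integral_lborel[OF _ _ hi]) (use k in auto)
  moreover have "(\<integral>\<^sup>+t. ennreal (k * t powr a) * indicator {0..c} t \<partial>lborel)
      = integral\<^sup>N lborel (\<lambda>t. if t \<in> {0..c} then k * t powr a else 0)"
    by (rule nn_integral_cong) (simp add: indicator_def)
  ultimately show ?thesis by simp
qed

lemma nn_int_powr_inf:
  fixes e c k :: real assumes e: "e < -1" and c: "c > 0" and k: "k \<ge> 0"
  shows "(\<integral>\<^sup>+t. ennreal (k * t powr e) * indicator {c..} t \<partial>lborel) = ennreal (k * (- (c powr (e+1)) / (e+1)))"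
proof -
  have "((\<lambda>t. t powr e) has_integral (- (c powr (e+1)) / (e+1))) {c..}"
    by (rule has_integral_powr_to_inf) (use e c in auto)
  then have "((\<lambda>t. k * t powr e) has_integral (k * (- (c powr (e+1)) / (e+1)))) {c..}"
    by (intro has_integral_mult_right)
  then have hi: "((\<lambda>t. if t \<in> {c..} then k * t powr e else 0) has_integral (k * (- (c powr (e+1)) / (e+1)))) UNIV"
    by (subst has_integral_restrict_UNIV)
  have "integral\<^sup>N lborel (\<lambda>t. if t \<in> {c..} then k * t powr e else 0) = k * (- (c powr (e+1)) / (e+1))"
    by (rule nn_integral_has_integral_lborel[OF _ _ hi]) (use k in auto)
  moreover have "(\<integral>\<^sup>+t. ennreal (k * t powr e) * indicator {c..} t \<partial>lborel)
      = integral\<^sup>N lborel (\<lambda>t. if t \<in> {c..} then k * t powr e else 0)"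
    by (rule nn_integral_cong) (simp add: indicator_def)
  ultimately show ?thesis by simp
qed

context L23
begin

lemma level_bound:
  fixes \<rho> :: "real \<Rightarrow> real"
  assumes \<rho>m[measurable]: "\<rho> \<in> borel_measurable borel" and \<rho>0: "\<And>x. 0 \<le> \<rho> x"
    and dens: "\<nu> = density lborel (\<lambda>x. ennreal (\<rho> x))" and t: "t > 0"
  shows "emeasure lborel {x. t \<le> \<rho> x} = ennreal (measure lborel {x. t \<le> \<rho> x})"
    "t * measure lborel {x. t \<le> \<rho> x} \<le> 1"
    "t * measure lborel {x. t \<le> \<rho> x} \<le> C * measure lborel {x. t \<le> \<rho> x} powr \<alpha>"
proof -
  define A where "A = {x. t \<le> \<rho> x}"
  have AB[measurable]: "A \<in> sets borel" unfolding A_def by measurable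
  have "ennreal t * emeasure lborel A = (\<integral>\<^sup>+x. ennreal t * indicator A x \<partial>lborel)"
    by (rule nn_integral_cmult_indicator[symmetric]) simp
  also have "\<dots> \<le> (\<integral>\<^sup>+x. ennreal (\<rho> x) * indicator A x \<partial>lborel)"
    by (rule nn_integral_mono) (auto simp: A_def indicator_def intro!: ennreal_leI)
  also have "\<dots> = emeasure \<nu> A" unfolding dens by (rule emeasure_density[symmetric]) auto
  finally have le: "ennreal t * emeasure lborel A \<le> emeasure \<nu> A" .
  have "emeasure \<nu> A \<le> 1" by (rule N.emeasure_le_1)
  then have le1: "ennreal t * emeasure lborel A \<le> 1" using le by simp
  have fin: "emeasure lborel A \<noteq> top"
  proof
    assume "emeasure lborel A = top"
    then have "ennreal t * emeasure lborel A = top" using t by (simp add: ennreal_mult_top)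
    then show False using le1 by (simp add: top_unique)
  qed
  show e: "emeasure lborel {x. t \<le> \<rho> x} = ennreal (measure lborel {x. t \<le> \<rho> x})"
    using emeasure_eq_ennreal_measure[OF fin] by (simp add: A_def)
  have eA: "emeasure lborel A = ennreal (measure lborel A)" using e by (simp add: A_def)
  have tm: "ennreal (t * measure lborel A) = ennreal t * emeasure lborel A"
    using t by (simp add: eA ennreal_mult)
  have "ennreal (t * measure lborel A) \<le> ennreal 1" using le1 tm by simp
  then show "t * measure lborel {x. t \<le> \<rho> x} \<le> 1" by (simp add: A_def)
  have "ennreal (t * measure lborel A) \<le> ennreal (measure \<nu> A)"
    using le tm N.emeasure_eq_measure by simp
  then have "t * measure lborel A \<le> measure \<nu> A" by simp
  also have "\<dots> \<le> C * measure lborel A powr \<alpha>"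
    by (rule borel_bound[OF AB]) (use fin in \<open>simp add: less_top\<close>)
  finally show "t * measure lborel {x. t \<le> \<rho> x} \<le> C * measure lborel {x. t \<le> \<rho> x} powr \<alpha>"
    by (simp add: A_def)
qed

lemma Lp_bound:
  fixes \<rho> :: "real \<Rightarrow> real" and p :: real
  assumes \<rho>m[measurable]: "\<rho> \<in> borel_measurable borel" and \<rho>0: "\<And>x. 0 \<le> \<rho> x"
    and dens: "\<nu> = density lborel (\<lambda>x. ennreal (\<rho> x))" and p: "1 < p"
    and pa: "\<alpha> = 1 \<or> p < 1 / (1 - \<alpha>)"
  shows "integrable lborel (\<lambda>x. \<rho> x powr p)
                \<and> (integral\<^sup>L lborel (\<lambda>x. \<rho> x powr p)) powr (1 / p)
                   \<le> (p / (p - 1) + (if \<alpha> = 1 then 0 else p / (1 / (1 - \<alpha>) - p))) powr (1 / p)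
                     * C powr ((1 / \<alpha>) * (1 - 1 / p))"
proof -
  define t0 where "t0 = C powr (1/\<alpha>)"
  have t00: "t0 > 0" using C0 by (simp add: t0_def)
  define \<beta> where "\<beta> = 1 / (1 - \<alpha>)"
  define k2 where "k2 = (if \<alpha> = 1 then 0 else p * C powr \<beta>)"
  have k20: "k2 \<ge> 0" using p by (simp add: k2_def)
  define g where "g = (\<lambda>t. ennreal (p * t powr (p-2)) * indicator {0..t0} t + ennreal (k2 * t powr (p-1-\<beta>)) * indicator {t0..} t)"
  define Kp where "Kp = p / (p - 1) + (if \<alpha> = 1 then 0 else p / (1 / (1 - \<alpha>) - p))"
  define I where "I = Kp * C powr ((p-1)/\<alpha>)"
  have Kp0: "Kp \<ge> 0"
  proof -
    have "(if \<alpha> = 1 then 0 else p / (1 / (1 - \<alpha>) - p)) \<ge> 0" using pa p by auto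
    then show ?thesis using p unfolding Kp_def by simp
  qed
  have step1: "(\<integral>\<^sup>+x. ennreal (\<rho> x powr p) \<partial>lborel)
     = (\<integral>\<^sup>+t. ennreal (p * t powr (p-1)) * indicator {0..} t * emeasure lborel {x. t \<le> \<rho> x} \<partial>lborel)"
    by (rule layer_cake_p[OF \<rho>m \<rho>0 p])
  have step2: "\<dots> \<le> (\<integral>\<^sup>+t. g t \<partial>lborel)"
  proof (rule nn_integral_mono)
    fix t :: real
    show "ennreal (p * t powr (p-1)) * indicator {0..} t * emeasure lborel {x. t \<le> \<rho> x} \<le> g t"
    proof (cases "t > 0")
      case False
      then have "ennreal (p * t powr (p-1)) * indicator {0..} t = 0"
        by (cases "t = 0") (auto simp: indicator_def)
      then show ?thesis by (metis mult_zero_left zero_le)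
    next
      case True
      define m where "m = measure lborel {x. t \<le> \<rho> x}"
      note lb = level_bound[OF \<rho>m \<rho>0 dens True]
      have m0: "0 \<le> m" by (simp add: m_def)
      have "ennreal (p * t powr (p-1)) * indicator {0..} t * emeasure lborel {x. t \<le> \<rho> x}
          = ennreal (p * t powr (p-1) * m)"
        using True p m0 lb(1) by (simp add: m_def ennreal_mult indicator_def)
      also have "\<dots> \<le> ennreal (if t \<le> C powr (1/\<alpha>) then p * t powr (p-2)
          else if \<alpha> = 1 then 0 else p * C powr (1/(1-\<alpha>)) * t powr (p - 1 - 1/(1-\<alpha>)))"
        by (rule ennreal_leI, rule pw_bound[OF True m0 _ _ C0 a0 a1 p pa]) (use lb in \<open>simp_all add: m_def\<close>)
      also have "\<dots> \<le> g t"
      proof (cases "t \<le> t0")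
        case True2: True
        have "ennreal (p * t powr (p-2)) \<le> ennreal (p * t powr (p-2)) * indicator {0..t0} t"
          using True True2 by (simp add: indicator_def)
        also have "\<dots> \<le> g t" unfolding g_def by simp
        finally show ?thesis using True2 by (simp add: t0_def)
      next
        case False2: False
        have eq: "(if \<alpha> = 1 then 0 else p * C powr (1/(1-\<alpha>)) * t powr (p - 1 - 1/(1-\<alpha>))) = k2 * t powr (p-1-\<beta>)"
          by (simp add: k2_def \<beta>_def)
        have "ennreal (k2 * t powr (p-1-\<beta>)) \<le> ennreal (k2 * t powr (p-1-\<beta>)) * indicator {t0..} t"
          using False2 by (simp add: indicator_def)
        also have "\<dots> \<le> g t" unfolding g_def by simp
        finally show ?thesis using False2 eq by (simp add: t0_def)
      qed
      finally show ?thesis .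
    qed
  qed
  have int1: "(\<integral>\<^sup>+t. ennreal (p * t powr (p-2)) * indicator {0..t0} t \<partial>lborel) = ennreal (p * (t0 powr (p-1) / (p-1)))"
    using nn_int_powr_0c[of "p-2" t0 p] p t00 by simp
  have int2: "(\<integral>\<^sup>+t. ennreal (k2 * t powr (p-1-\<beta>)) * indicator {t0..} t \<partial>lborel)
     = ennreal (if \<alpha> = 1 then 0 else p * C powr \<beta> * (t0 powr (p - \<beta>) / (\<beta> - p)))"
  proof (cases "\<alpha> = 1")
    case True then show ?thesis by (simp add: k2_def)
  next
    case False
    then have "p < \<beta>" using pa by (simp add: \<beta>_def)
    then have "(\<integral>\<^sup>+t. ennreal (k2 * t powr (p-1-\<beta>)) * indicator {t0..} t \<partial>lborel)
       = ennreal (k2 * (- (t0 powr (p-1-\<beta>+1)) / (p-1-\<beta>+1)))"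
      by (intro nn_int_powr_inf t00 k20) simp
    also have "k2 * (- (t0 powr (p-1-\<beta>+1)) / (p-1-\<beta>+1)) = p * C powr \<beta> * (t0 powr (p - \<beta>) / (\<beta> - p))"
      using False by (simp add: k2_def divide_simps algebra_simps)
    finally show ?thesis using False by simp
  qed
  have gint: "(\<integral>\<^sup>+t. g t \<partial>lborel) = ennreal (p * (t0 powr (p-1) / (p-1))) + ennreal (if \<alpha> = 1 then 0 else p * C powr \<beta> * (t0 powr (p - \<beta>) / (\<beta> - p)))"
    unfolding g_def int1[symmetric] int2[symmetric] by (rule nn_integral_add) auto
  have I_eq: "p * (t0 powr (p-1) / (p-1)) + (if \<alpha> = 1 then 0 else p * C powr \<beta> * (t0 powr (p - \<beta>) / (\<beta> - p))) = I"
  proof -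
    have e1: "t0 powr (p-1) = C powr ((p-1)/\<alpha>)" unfolding t0_def using C0 by (simp add: powr_powr)
    have e2: "C powr \<beta> * t0 powr (p - \<beta>) = C powr ((p-1)/\<alpha>)" if "\<alpha> \<noteq> 1"
    proof -
      have "C powr \<beta> * t0 powr (p - \<beta>) = C powr (\<beta> + (1/\<alpha>) * (p - \<beta>))"
        unfolding t0_def using C0 by (simp add: powr_powr powr_add)
      also have "\<beta> + (1/\<alpha>) * (p - \<beta>) = (p-1)/\<alpha>"
      proof -
        have d: "1 - \<alpha> \<noteq> 0" using that by simp
        have "\<alpha> * \<beta> - \<beta> = - ((1 - \<alpha>) * \<beta>)" by (simp add: algebra_simps)
        also have "(1 - \<alpha>) * \<beta> = 1" unfolding \<beta>_def using d by simp
        finally have h1: "\<alpha> * \<beta> - \<beta> = -1" by simp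
        have "\<beta> + (1/\<alpha>) * (p - \<beta>) = (\<alpha> * \<beta> - \<beta> + p) / \<alpha>" using a0 by (simp add: field_simps)
        also have "\<dots> = (p - 1) / \<alpha>" unfolding h1 by simp
        finally show ?thesis .
      qed
      finally show ?thesis .
    qed
    show ?thesis
    proof (cases "\<alpha> = 1")
      case True then show ?thesis by (simp add: I_def Kp_def e1)
    next
      case False
      have "p * C powr \<beta> * (t0 powr (p - \<beta>) / (\<beta> - p)) = p / (\<beta> - p) * (C powr \<beta> * t0 powr (p - \<beta>))"
        by simp
      then show ?thesis using False e1 e2[OF False] by (simp add: I_def Kp_def \<beta>_def algebra_simps)
    qed
  qed
  have nn_le: "(\<integral>\<^sup>+x. ennreal (\<rho> x powr p) \<partial>lborel) \<le> ennreal I"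
  proof -
    have nn1: "0 \<le> p * (t0 powr (p-1) / (p-1))" using p by simp
    have nn2: "0 \<le> (if \<alpha> = 1 then 0 else p * C powr \<beta> * (t0 powr (p - \<beta>) / (\<beta> - p)))"
      using pa p by (auto simp: \<beta>_def)
    have "(\<integral>\<^sup>+x. ennreal (\<rho> x powr p) \<partial>lborel) \<le> (\<integral>\<^sup>+t. g t \<partial>lborel)" using step1 step2 by simp
    also have "\<dots> = ennreal I" unfolding gint I_eq[symmetric] using nn1 nn2 by simp
    finally show ?thesis .
  qed
  have I0: "I \<ge> 0" using Kp0 by (simp add: I_def)
  have meas: "(\<lambda>x. \<rho> x powr p) \<in> borel_measurable lborel" by measurable
  have integ: "integrable lborel (\<lambda>x. \<rho> x powr p)"
    by (rule integrableI_nonneg[OF meas]) (use nn_le in \<open>auto simp: top_unique intro: le_less_trans\<close>)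
  have "integral\<^sup>L lborel (\<lambda>x. \<rho> x powr p) = enn2real (\<integral>\<^sup>+x. ennreal (\<rho> x powr p) \<partial>lborel)"
    by (rule integral_eq_nn_integral[OF meas]) simp
  also have "\<dots> \<le> I" by (rule enn2real_leI[OF I0 nn_le])
  finally have intle: "integral\<^sup>L lborel (\<lambda>x. \<rho> x powr p) \<le> I" .
  have "(integral\<^sup>L lborel (\<lambda>x. \<rho> x powr p)) powr (1/p) \<le> I powr (1/p)"
    by (rule powr_mono2) (use intle p in \<open>auto intro: integral_nonneg_AE\<close>)
  also have "I powr (1/p) = Kp powr (1/p) * C powr ((1 / \<alpha>) * (1 - 1 / p))"
  proof -
    have "I powr (1/p) = Kp powr (1/p) * (C powr ((p-1)/\<alpha>)) powr (1/p)"
      unfolding I_def using Kp0 by (simp add: powr_mult)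
    also have "(C powr ((p-1)/\<alpha>)) powr (1/p) = C powr ((1 / \<alpha>) * (1 - 1 / p))"
      using p a0 by (simp add: powr_powr field_simps)
    finally show ?thesis .
  qed
  finally show ?thesis using integ by (simp add: Kp_def)
qed

end



context L23
begin

lemma ac: "absolutely_continuous lborel \<nu>"
  unfolding absolutely_continuous_def
proof
  fix A :: "real set" assume A: "A \<in> null_sets lborel"
  then have AB: "A \<in> sets borel" and A0: "emeasure lborel A = 0" by (auto simp: null_sets_def)
  have "measure \<nu> A \<le> C * measure lborel A powr \<alpha>" by (rule borel_bound[OF AB]) (simp add: A0)
  also have "measure lborel A = 0" by (simp add: measure_def A0)
  finally have "measure \<nu> A \<le> 0" by simp
  then have "measure \<nu> A = 0" using measure_nonneg[of \<nu> A] by linarith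
  then have "emeasure \<nu> A = 0" using N.emeasure_eq_measure by simp
  then show "A \<in> null_sets \<nu>" using AB S by (simp add: null_sets_def)
qed

lemma dens_exists: "\<exists>\<rho>. \<rho> \<in> borel_measurable borel \<and> (\<forall>x. 0 \<le> \<rho> x) \<and> \<nu> = density lborel (\<lambda>x. ennreal (\<rho> x))"
proof -
  have S': "sets \<nu> = sets lborel" using S by simp
  obtain D where D: "D \<in> borel_measurable lborel" "AE x in lborel. RN_deriv lborel \<nu> x = ennreal (D x)"
    "AE x in \<nu>. 0 < D x" "\<And>x. 0 \<le> D x"
    by (rule sigma_finite_measure.real_RN_deriv[OF sigma_finite_lborel finite_nu ac S']) blast
  have "density lborel (\<lambda>x. ennreal (D x)) = density lborel (RN_deriv lborel \<nu>)"
  proof (rule density_cong)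
    show "(\<lambda>x. ennreal (D x)) \<in> borel_measurable lborel" using D(1) by measurable
    show "RN_deriv lborel \<nu> \<in> borel_measurable lborel" by (rule borel_measurable_RN_deriv)
    show "AE x in lborel. ennreal (D x) = RN_deriv lborel \<nu> x" by (rule AE_symmetric[OF D(2)])
  qed
  also have "\<dots> = \<nu>" by (rule sigma_finite_measure.density_RN_deriv[OF sigma_finite_lborel ac S'])
  finally have "\<nu> = density lborel (\<lambda>x. ennreal (D x))" by simp
  moreover have "D \<in> borel_measurable borel" using D(1) by simp
  ultimately show ?thesis using D(4) by blast
qed

end

theorem lemma2p3:
  fixes \<alpha> C :: real and \<nu> :: "real measure"
  assumes "0 < \<alpha>" "\<alpha> \<le> 1" "0 < C"
    and "prob_space \<nu>" "sets \<nu> = sets borel"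
    and hyp: "\<And>\<phi>. \<phi> \<in> Cb_inf \<Longrightarrow> sup_norm \<phi> \<le> 1 \<Longrightarrow>
               integral\<^sup>L \<nu> (deriv \<phi>) \<le> C * sup_norm (deriv \<phi>) powr (1 - \<alpha>)"
  shows "(\<forall>A \<in> sets borel. emeasure lborel A < \<infinity> \<longrightarrow>
            measure \<nu> A \<le> C * measure lborel A powr \<alpha>)
       \<and> (\<exists>\<rho>. \<rho> \<in> borel_measurable borel \<and> (\<forall>x. 0 \<le> \<rho> x)
              \<and> \<nu> = density lborel (\<lambda>x. ennreal (\<rho> x)))
       \<and> (\<forall>\<rho> p. \<rho> \<in> borel_measurable borel \<longrightarrow> (\<forall>x. 0 \<le> \<rho> x)
              \<longrightarrow> \<nu> = density lborel (\<lambda>x. ennreal (\<rho> x))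
              \<longrightarrow> 1 < p \<longrightarrow> (\<alpha> = 1 \<or> p < 1 / (1 - \<alpha>))
              \<longrightarrow> integrable lborel (\<lambda>x. \<rho> x powr p)
                \<and> (integral\<^sup>L lborel (\<lambda>x. \<rho> x powr p)) powr (1 / p)
                   \<le> (p / (p - 1) + (if \<alpha> = 1 then 0 else p / (1 / (1 - \<alpha>) - p))) powr (1 / p)
                     * C powr ((1 / \<alpha>) * (1 - 1 / p)))"
proof -
  interpret L23 \<alpha> C \<nu> by (rule L23.intro) (fact assms)+
  have P1: "\<forall>A \<in> sets borel. emeasure lborel A < \<infinity> \<longrightarrow> measure \<nu> A \<le> C * measure lborel A powr \<alpha>"
    by (intro ballI impI) (rule borel_bound)
  have P2: "\<exists>\<rho>. \<rho> \<in> borel_measurable borel \<and> (\<forall>x. 0 \<le> \<rho> x) \<and> \<nu> = density lborel (\<lambda>x. ennreal (\<rho> x))"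
    by (rule dens_exists)
  have P3: "\<forall>\<rho> p. \<rho> \<in> borel_measurable borel \<longrightarrow> (\<forall>x. 0 \<le> \<rho> x)
              \<longrightarrow> \<nu> = density lborel (\<lambda>x. ennreal (\<rho> x))
              \<longrightarrow> 1 < p \<longrightarrow> (\<alpha> = 1 \<or> p < 1 / (1 - \<alpha>))
              \<longrightarrow> integrable lborel (\<lambda>x. \<rho> x powr p)
                \<and> (integral\<^sup>L lborel (\<lambda>x. \<rho> x powr p)) powr (1 / p)
                   \<le> (p / (p - 1) + (if \<alpha> = 1 then 0 else p / (1 / (1 - \<alpha>) - p))) powr (1 / p)
                     * C powr ((1 / \<alpha>) * (1 - 1 / p))"
  proof (intro allI impI)
    fix \<rho> :: "real \<Rightarrow> real" and p :: real
    assume a: "\<rho> \<in> borel_measurable borel" "\<forall>x. 0 \<le> \<rho> x" "\<nu> = density lborel (\<lambda>x. ennreal (\<rho> x))"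
      "1 < p" "\<alpha> = 1 \<or> p < 1 / (1 - \<alpha>)"
    have a2: "\<And>x. 0 \<le> \<rho> x" using a(2) by blast
    show "integrable lborel (\<lambda>x. \<rho> x powr p)
                \<and> (integral\<^sup>L lborel (\<lambda>x. \<rho> x powr p)) powr (1 / p)
                   \<le> (p / (p - 1) + (if \<alpha> = 1 then 0 else p / (1 / (1 - \<alpha>) - p))) powr (1 / p)
                     * C powr ((1 / \<alpha>) * (1 - 1 / p))"
      by (rule Lp_bound[OF a(1) a2 a(3) a(4) a(5)])
  qed
  show ?thesis by (rule conjI[OF P1 conjI[OF P2 P3]])
qed



end
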